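(* Let $\lambda\in\mathbb{C}\setminus(\mathbb{R}\cup S^1)$, $\mu\in\mathbb{C}\setminus\{0,1\}$, and $a,b\in\mathbb{C}^n$ with $a\neq b$. Let $G$ be the group generated by $f=(a,\lambda)$ and $g=(b,\mu)$, and let $L=\mathbb{C}(b-a)+a=\{a+t(b-a):t\in\mathbb{C}\}$. Then $\overline{G_1(z)}=L$ for every $z\in L$; in particular $\overline{G(z)}=L$ for every $z\in L$.
   Context: $S^1=\{z\in\mathbb{C}:|z|=1\}$. For $c\in\mathbb{C}^n$ and $\nu\in\mathbb{C}\setminus\{0,1\}$, $(c,\nu)$ denotes the map $z\mapsto\nu(z-c)+c$ of $\mathbb{C}^n$. $G_1$ is the set of translations $z\mapsto z+v$ belonging to $G$, and $G_1(z)=\{T(z):T\in G_1\}$; $G(z)=\{h(z):h\in G\}$. *)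

theory Defs
  imports "HOL-Analysis.Analysis"
begin

definition homothety :: "complex^'n \<Rightarrow> complex \<Rightarrow> complex^'n \<Rightarrow> complex^'n" where
  "homothety c nu = (\<lambda>z. nu *s (z - c) + c)"

inductive_set gen_group :: "('a \<Rightarrow> 'a) set \<Rightarrow> ('a \<Rightarrow> 'a) set" for S where
  gen_id: "id \<in> gen_group S"
| gen_gen: "s \<in> S \<Longrightarrow> h \<in> gen_group S \<Longrightarrow> s \<circ> h \<in> gen_group S"
| gen_inv: "s \<in> S \<Longrightarrow> h \<in> gen_group S \<Longrightarrow> inv s \<circ> h \<in> gen_group S"

text \<open>G_1: the translations belonging to G.\<close>
definition translations_in :: "(('a::ab_group_add) \<Rightarrow> 'a) set \<Rightarrow> ('a \<Rightarrow> 'a) set" where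
  "translations_in G = {T \<in> G. \<exists>v. T = (\<lambda>z. z + v)}"

definition orbit :: "('a \<Rightarrow> 'a) set \<Rightarrow> 'a \<Rightarrow> 'a set" where
  "orbit G z = {h z | h. h \<in> G}"

end

theory Submission
  imports Defs
begin

lemma norm_smult_vec: "norm (c *s (x::complex^'n)) = cmod c * norm x"
proof -
  have "norm (c *s x) = L2_set (\<lambda>i. cmod c * norm (x$i)) UNIV"
    by (simp add: norm_vec_def norm_mult)
  also have "\<dots> = cmod c * L2_set (\<lambda>i. norm (x$i)) UNIV"
    by (simp add: L2_set_right_distrib)
  finally show ?thesis by (simp add: norm_vec_def)
qed

lemma gen_group_comp: "h1 \<in> gen_group S \<Longrightarrow> h2 \<in> gen_group S \<Longrightarrow> h1 \<circ> h2 \<in> gen_group S"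
  by (induction rule: gen_group.induct) (auto simp: comp_assoc intro: gen_group.intros)

lemma gen_group_gen: "s \<in> S \<Longrightarrow> s \<in> gen_group S"
  using gen_gen[OF _ gen_id] by simp

lemma gen_group_geninv: "s \<in> S \<Longrightarrow> inv s \<in> gen_group S"
  using gen_inv[OF _ gen_id] by simp

lemma gen_group_inv:
  assumes "\<And>s. s \<in> S \<Longrightarrow> bij s" and "h \<in> gen_group S"
  shows "bij h \<and> inv h \<in> gen_group S"
  using assms(2)
proof (induction rule: gen_group.induct)
  case gen_id
  have "inv (id::'a\<Rightarrow>'a) = id" by (rule inv_id)
  then show ?case using gen_group.gen_id[of S] bij_id by metis
next
  case (gen_gen s h)
  have bs: "bij s" using assms(1) gen_gen by auto
  have "inv (s \<circ> h) = inv h \<circ> inv s" using o_inv_distrib bs gen_gen by blast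
  then show ?case using bs gen_gen gen_group_comp gen_group_geninv bij_comp by metis
next
  case (gen_inv s h)
  have bs: "bij s" using assms(1) gen_inv by auto
  have bis: "bij (inv s)" using bs bij_imp_bij_inv by blast
  have "inv (inv s \<circ> h) = inv h \<circ> inv (inv s)" using o_inv_distrib bis gen_inv by blast
  also have "\<dots> = inv h \<circ> s" using bs inv_inv_eq by metis
  finally show ?case using bis gen_inv gen_group_comp gen_group_gen bij_comp by metis
qed

lemma homothety_comp_inv: "nu \<noteq> 0 \<Longrightarrow> homothety c nu \<circ> homothety c (inverse nu) = id"
  by (auto simp: fun_eq_iff homothety_def vec_eq_iff field_simps)

lemma homothety_comp_inv2: "nu \<noteq> 0 \<Longrightarrow> homothety c (inverse nu) \<circ> homothety c nu = id"
  by (auto simp: fun_eq_iff homothety_def vec_eq_iff field_simps)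

lemma inv_homothety: "nu \<noteq> 0 \<Longrightarrow> inv (homothety c nu) = homothety c (inverse nu)"
  by (rule inv_unique_comp) (auto simp: homothety_comp_inv homothety_comp_inv2)

lemma bij_homothety: "nu \<noteq> 0 \<Longrightarrow> bij (homothety c nu)"
  by (rule o_bij[of "homothety c (inverse nu)"]) (auto simp: homothety_comp_inv homothety_comp_inv2)

lemma inv_transl: "inv (\<lambda>z::'a::ab_group_add. z + v) = (\<lambda>z. z + - v)"
  by (rule inv_unique_comp) (auto simp: fun_eq_iff)

lemma lattice_approx:
  fixes rho :: complex
  assumes "Im rho \<noteq> 0" "cmod rho < 1"
  shows "\<exists>p q::int. cmod (y - (of_int p + of_int q * rho)) \<le> 1"
proof -
  define q where "q = round (Im y / Im rho)"
  define r where "r = y - of_int q * rho"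
  define p where "p = round (Re r)"
  have "\<bar>of_int q - Im y / Im rho\<bar> \<le> 1/2" unfolding q_def by (rule of_int_round_abs_le)
  hence "\<bar>Im rho\<bar> * \<bar>of_int q - Im y / Im rho\<bar> \<le> \<bar>Im rho\<bar> * (1/2)"
    by (intro mult_left_mono) auto
  also have "\<bar>Im rho\<bar> * \<bar>of_int q - Im y / Im rho\<bar> = \<bar>Im r\<bar>"
    using assms(1) unfolding r_def by (simp add: abs_mult[symmetric] field_simps)
  finally have i: "\<bar>Im r\<bar> \<le> \<bar>Im rho\<bar> / 2" by simp
  have "\<bar>Im rho\<bar> \<le> cmod rho" by (rule abs_Im_le_cmod)
  with i assms(2) have i2: "\<bar>Im r\<bar> \<le> 1/2" by linarith
  have re: "\<bar>of_int p - Re r\<bar> \<le> 1/2" unfolding p_def by (rule of_int_round_abs_le)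
  have eq: "y - (of_int p + of_int q * rho) = r - of_int p" unfolding r_def by simp
  have "cmod (r - of_int p) \<le> \<bar>Re (r - of_int p)\<bar> + \<bar>Im (r - of_int p)\<bar>" by (rule cmod_le)
  also have "\<dots> \<le> 1" using re i2 by (simp add: abs_minus_commute)
  finally show ?thesis using eq by metis
qed

theorem lemma3p1:
  fixes lam mu :: complex and a b :: "complex^'n"
  assumes "lam \<notin> \<real>" and "cmod lam \<noteq> 1"
    and "mu \<noteq> 0" and "mu \<noteq> 1"
    and "a \<noteq> b"
  defines "G \<equiv> gen_group {homothety a lam, homothety b mu}"
    and "L \<equiv> {a + t *s (b - a) | t. True}"
  shows "\<forall>z\<in>L. closure (orbit (translations_in G) z) = L \<and> closure (orbit G z) = L"
proof -
  define d where "d = b - a"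
  have d0: "d \<noteq> 0" using assms(5) unfolding d_def by simp
  have lam0: "lam \<noteq> 0" using assms(1) by auto
  have Imlam: "Im lam \<noteq> 0" using assms(1) complex_is_Real_iff by auto
  have bijS: "\<And>s. s \<in> {homothety a lam, homothety b mu} \<Longrightarrow> bij s"
    using bij_homothety lam0 assms(3) by auto
  have comp: "\<And>h1 h2. h1 \<in> G \<Longrightarrow> h2 \<in> G \<Longrightarrow> h1 \<circ> h2 \<in> G"
    unfolding G_def by (rule gen_group_comp)
  have fG: "homothety a lam \<in> G" unfolding G_def by (rule gen_group_gen) simp
  have gG: "homothety b mu \<in> G" unfolding G_def by (rule gen_group_gen) simp
  have fiG: "homothety a (inverse lam) \<in> G"
    using gen_group_geninv[of "homothety a lam" "{homothety a lam, homothety b mu}"]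
    unfolding G_def by (simp add: inv_homothety lam0)
  have giG: "homothety b (inverse mu) \<in> G"
    using gen_group_geninv[of "homothety b mu" "{homothety a lam, homothety b mu}"]
    unfolding G_def by (simp add: inv_homothety assms(3))
  have invG: "\<And>h. h \<in> G \<Longrightarrow> inv h \<in> G"
    using gen_group_inv[OF bijS] unfolding G_def by blast
  define V where "V = {v. (\<lambda>z. z + v) \<in> G}"
  have V_add: "\<And>v w. v \<in> V \<Longrightarrow> w \<in> V \<Longrightarrow> v + w \<in> V"
  proof -
    fix v w assume "v \<in> V" "w \<in> V"
    hence "(\<lambda>z. z + v) \<circ> (\<lambda>z. z + w) \<in> G" using comp V_def by auto
    moreover have "(\<lambda>z. z + v) \<circ> (\<lambda>z. z + w) = (\<lambda>z. z + (v + w))"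
      by (auto simp: fun_eq_iff algebra_simps)
    ultimately show "v + w \<in> V" unfolding V_def by simp
  qed
  have V_neg: "\<And>v. v \<in> V \<Longrightarrow> - v \<in> V"
  proof -
    fix v assume "v \<in> V"
    hence "inv (\<lambda>z. z + v) \<in> G" using invG V_def by auto
    thus "- v \<in> V" unfolding V_def inv_transl by simp
  qed
  have V_nat: "\<And>v n. v \<in> V \<Longrightarrow> of_nat n *s v \<in> V"
  proof -
    fix v n assume v: "v \<in> V"
    show "of_nat n *s v \<in> V"
    proof (induction n)
      case 0
      have "(\<lambda>z::complex^'n. z + 0) = id" by auto
      then show ?case using V_add[OF v V_neg[OF v]] by simp
    next
      case (Suc n)
      have "of_nat (Suc n) *s v = v + of_nat n *s v" by (simp add: vec_eq_iff algebra_simps)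
      then show ?case using V_add[OF v Suc] by simp
    qed
  qed
  have V_int: "\<And>v k. v \<in> V \<Longrightarrow> of_int k *s v \<in> V"
  proof -
    fix v k assume v: "v \<in> V"
    show "of_int k *s v \<in> V"
    proof (cases "k \<ge> 0")
      case True
      then have "(of_int k :: complex) = of_nat (nat k)" by simp
      then show ?thesis using V_nat[OF v] by metis
    next
      case False
      then have "of_int k *s v = - (of_nat (nat (-k)) *s v)" by (simp add: vec_eq_iff)
      then show ?thesis using V_neg[OF V_nat[OF v]] by simp
    qed
  qed
  have V_conj: "\<And>nu v. homothety a nu \<in> G \<Longrightarrow> homothety a (inverse nu) \<in> G \<Longrightarrow> nu \<noteq> 0
     \<Longrightarrow> v \<in> V \<Longrightarrow> nu *s v \<in> V"
  proof -
    fix nu v assume h: "homothety a nu \<in> G" "homothety a (inverse nu) \<in> G" "nu \<noteq> 0" "v \<in> V"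
    have "homothety a nu \<circ> (\<lambda>z. z + v) \<circ> homothety a (inverse nu) \<in> G"
      using h comp V_def by auto
    moreover have "homothety a nu \<circ> (\<lambda>z. z + v) \<circ> homothety a (inverse nu) = (\<lambda>z. z + nu *s v)"
      using h(3) by (auto simp: fun_eq_iff homothety_def vec_eq_iff field_simps)
    ultimately show "nu *s v \<in> V" unfolding V_def by simp
  qed
  define kappa where "kappa = (mu - 1) * (1 - lam)"
  have kappa0: "kappa \<noteq> 0" unfolding kappa_def using assms(4) Imlam by auto
  have commG: "homothety a lam \<circ> homothety b mu \<circ> homothety a (inverse lam) \<circ> homothety b (inverse mu) \<in> G"
    using comp fG gG fiG giG by auto
  have "homothety a lam \<circ> homothety b mu \<circ> homothety a (inverse lam) \<circ> homothety b (inverse mu)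
      = (\<lambda>z. z + kappa *s d)"
    using lam0 assms(3) unfolding kappa_def d_def
    by (auto simp: fun_eq_iff homothety_def vec_eq_iff field_simps)
  with commG have kV: "kappa *s d \<in> V" unfolding V_def by simp
  obtain rho where rho: "homothety a rho \<in> G" "homothety a (inverse rho) \<in> G" "cmod rho < 1"
    "Im rho \<noteq> 0" "rho \<noteq> 0"
  proof (cases "cmod lam < 1")
    case True
    then show ?thesis using that[of lam] fG fiG Imlam lam0 by auto
  next
    case False
    with assms(2) have gt: "cmod lam > 1" by simp
    have "cmod (inverse lam) < 1" using gt by (simp add: norm_inverse inverse_less_1_iff)
    moreover have "Im (inverse lam) \<noteq> 0" using Imlam lam0 by (simp add: complex_eq_iff)
    ultimately show ?thesis using that[of "inverse lam"] fG fiG lam0 by auto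
  qed
  have Vpow: "\<And>m. (kappa * rho ^ m) *s d \<in> V"
  proof -
    fix m show "(kappa * rho ^ m) *s d \<in> V"
    proof (induction m)
      case 0 then show ?case using kV by simp
    next
      case (Suc m)
      have "rho *s ((kappa * rho ^ m) *s d) \<in> V" using V_conj[OF rho(1,2,5) Suc] .
      moreover have "rho *s ((kappa * rho ^ m) *s d) = (kappa * rho ^ Suc m) *s d"
        by (simp add: vec_eq_iff algebra_simps)
      ultimately show ?case by metis
    qed
  qed
  have Vlat: "\<And>m p q. (kappa * rho ^ m * (of_int p + of_int q * rho)) *s d \<in> V"
  proof -
    fix m p q
    have "(kappa * rho ^ m * (of_int p + of_int q * rho)) *s d
       = of_int p *s ((kappa * rho ^ m) *s d) + of_int q *s ((kappa * rho ^ Suc m) *s d)"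
      by (simp add: vec_eq_iff algebra_simps)
    then show "(kappa * rho ^ m * (of_int p + of_int q * rho)) *s d \<in> V"
      using V_add[OF V_int[OF Vpow[of m]] V_int[OF Vpow[of "Suc m"]]] by metis
  qed
  have Lmem: "\<And>t. a + t *s d \<in> L" unfolding L_def d_def by auto
  have homL: "\<And>s nu x. x \<in> L \<Longrightarrow> homothety (a + s *s d) nu x \<in> L"
  proof -
    fix s nu x assume "x \<in> L"
    then obtain t where t: "x = a + t *s d" unfolding L_def d_def by auto
    have "homothety (a + s *s d) nu x = a + (nu * (t - s) + s) *s d"
      unfolding t homothety_def by (simp add: vec_eq_iff algebra_simps)
    then show "homothety (a + s *s d) nu x \<in> L" using Lmem by metis
  qed
  have aeq: "a = a + 0 *s d" by (simp add: vec_eq_iff)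
  have beq: "b = a + 1 *s d" by (simp add: vec_eq_iff d_def)
  have homa: "\<And>nu x. x \<in> L \<Longrightarrow> homothety a nu x \<in> L" using homL[of _ 0] aeq by metis
  have homb: "\<And>nu x. x \<in> L \<Longrightarrow> homothety b nu x \<in> L" using homL[of _ 1] beq by metis
  have GL: "\<And>h x. h \<in> G \<Longrightarrow> x \<in> L \<Longrightarrow> h x \<in> L"
  proof -
    fix h x assume "h \<in> G" "x \<in> L"
    then show "h x \<in> L" unfolding G_def
    proof (induction arbitrary: x rule: gen_group.induct)
      case gen_id then show ?case by simp
    next
      case (gen_gen s h) then show ?case using homa homb by auto
    next
      case (gen_inv s h) then show ?case
        using homa homb by (auto simp: inv_homothety lam0 assms(3))
    qed
  qed
  obtain i where di: "d $ i \<noteq> 0" using d0 by (metis vec_eq_iff zero_index)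
  have Leq: "L = {x. x = a + ((x$i - a$i) / d$i) *s d}"
  proof
    show "L \<subseteq> {x. x = a + ((x$i - a$i) / d$i) *s d}"
      using di unfolding L_def d_def[symmetric] by (auto simp: vec_eq_iff)
    show "{x. x = a + ((x$i - a$i) / d$i) *s d} \<subseteq> L"
    proof
      fix x assume "x \<in> {x. x = a + ((x$i - a$i) / d$i) *s d}"
      hence h: "x = a + ((x$i - a$i) / d$i) *s d" by simp
      show "x \<in> L" by (subst h) (rule Lmem)
    qed
  qed
  have clL: "closed L"
    unfolding Leq
  proof (rule closed_Collect_eq)
    show "continuous_on UNIV (\<lambda>x::complex^'n. x)" by (rule continuous_on_id)
    have "(\<lambda>x. a + ((x$i - a$i) / d$i) *s d) = (\<lambda>x. \<chi> j. a$j + (x$i - a$i) / d$i * d$j)"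
      by (auto simp: vec_eq_iff)
    moreover have "continuous_on UNIV (\<lambda>x::complex^'n. \<chi> j. a$j + (x$i - a$i) / d$i * d$j)"
      using di by (intro continuous_on_vec_lambda continuous_intros) auto
    ultimately show "continuous_on UNIV (\<lambda>x. a + ((x$i - a$i) / d$i) *s d)" by metis
  qed
  show ?thesis
  proof
    fix z assume zL: "z \<in> L"
    then obtain s where s: "z = a + s *s d" unfolding L_def d_def by auto
    have sub1: "orbit G z \<subseteq> L" using GL zL unfolding orbit_def by auto
    have sub2: "orbit (translations_in G) z \<subseteq> orbit G z"
      unfolding orbit_def translations_in_def by auto
    have orbV: "\<And>v. v \<in> V \<Longrightarrow> z + v \<in> orbit (translations_in G) z"
      unfolding orbit_def translations_in_def V_def by auto
    have Lsub: "L \<subseteq> closure (orbit (translations_in G) z)"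
    proof
      fix x assume "x \<in> L"
      then obtain t where t: "x = a + t *s d" unfolding L_def d_def by auto
      show "x \<in> closure (orbit (translations_in G) z)"
        unfolding closure_approachable
      proof (intro allI impI)
        fix e :: real assume e: "e > 0"
        define D where "D = cmod kappa * (norm d + 1)"
        have D: "D > 0" unfolding D_def using kappa0 by (intro mult_pos_pos) (auto intro: add_nonneg_pos)
        obtain m where m: "cmod rho ^ m < e / D"
          using real_arch_pow_inv[of "e / D" "cmod rho"] e D rho(3) by auto
        obtain p q :: int where pq: "cmod ((t - s) / (kappa * rho ^ m) - (of_int p + of_int q * rho)) \<le> 1"
          using lattice_approx[OF rho(4,3)] by blast
        define c where "c = kappa * rho ^ m * (of_int p + of_int q * rho)"
        have cV: "c *s d \<in> V" unfolding c_def by (rule Vlat)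
        have km0: "kappa * rho ^ m \<noteq> 0" using kappa0 rho(5) by simp
        have "s + c - t = - (kappa * rho ^ m) * ((t - s) / (kappa * rho ^ m) - (of_int p + of_int q * rho))"
          unfolding c_def using km0 by (simp add: field_simps)
        hence "cmod (s + c - t) = cmod kappa * cmod rho ^ m * cmod ((t - s) / (kappa * rho ^ m) - (of_int p + of_int q * rho))"
          by (simp add: norm_mult norm_power)
        also have "\<dots> \<le> cmod kappa * cmod rho ^ m * 1"
          using pq by (intro mult_left_mono) auto
        finally have "cmod (s + c - t) \<le> cmod kappa * cmod rho ^ m * 1" .
        hence c1: "cmod (s + c - t) \<le> cmod kappa * cmod rho ^ m" by simp
        have "dist (z + c *s d) x = norm ((s + c - t) *s d)"
          unfolding s t dist_norm by (simp add: vec_eq_iff algebra_simps)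
        also have "\<dots> = cmod (s + c - t) * norm d" by (rule norm_smult_vec)
        also have "\<dots> \<le> cmod kappa * cmod rho ^ m * (norm d + 1)"
          using c1 by (intro mult_mono) auto
        also have "\<dots> = D * cmod rho ^ m" unfolding D_def by simp
        also have "\<dots> < D * (e / D)" using m D by (intro mult_strict_left_mono) auto
        also have "\<dots> = e" using D by simp
        finally show "\<exists>y\<in>orbit (translations_in G) z. dist y x < e"
          using orbV[OF cV] by blast
      qed
    qed
    have c1: "closure (orbit G z) \<subseteq> L" using sub1 clL closure_minimal by blast
    have c2: "closure (orbit (translations_in G) z) \<subseteq> closure (orbit G z)"
      using sub2 closure_mono by blast
    show "closure (orbit (translations_in G) z) = L \<and> closure (orbit G z) = L"
      using c1 c2 Lsub by blast
  qed
qed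

end
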